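(* Let $0<a<r$ and let $M_{r,a}$ be the open Möbius strip covered by two charts with coordinates $(\varphi,\tau)$, $\tau\in(-a,a)$, related on overlaps by $(\varphi,\tau)=(\bar\varphi,\bar\tau)$ for $\bar\varphi\in(0,\pi)$ and $(\varphi,\tau)=(\bar\varphi-2\pi,-\bar\tau)$ for $\bar\varphi\in(\pi,2\pi)$ (embedded in $\mathbb{R}^3$ as $((r+\tau\cos\frac\varphi2)\cos\varphi,(r+\tau\cos\frac\varphi2)\sin\varphi,\tau\sin\frac\varphi2)$). Put $g(\varphi,\tau)=(r+\tau\cos\frac\varphi2)^2+\frac{\tau^2}{4}$ and $k(\varphi,\tau)=4\cos\frac\varphi2\,(r+\tau\cos\frac\varphi2)+\tau$, and let $\varepsilon=(\varepsilon_\varphi\omega^\varphi+\varepsilon_\tau\omega^\tau)\wedge dt$ with $\varepsilon_\varphi=\tfrac12\dot\varphi^2\tau\sin\frac\varphi2(r+\tau\cos\frac\varphi2)-\tfrac12\dot\varphi\dot\tau\,k-g\ddot\varphi$, $\varepsilon_\tau=\tfrac14\dot\varphi^2k-\ddot\tau$. Then $\varepsilon$ is a globally defined, globally variational source form on $\mathbb{R}\times T^2M_{r,a}$, and $\lambda=\mathscr L\,dt$ with $$\mathscr L=-\tfrac12\dot\varphi^3\tau\sin\tfrac\varphi2\big(r+\tau\cos\tfrac\varphi2\big)t+\tfrac14\dot\varphi^2\dot\tau\,k\,t+g\dot\varphi\ddot\varphi\,t+\dot\tau\ddot\tau\,t+g\dot\varphi^2+\dot\tau^2$$ is a global Lagrange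 function on $\mathbb{R}\times T^2M_{r,a}$ with $E_\lambda=\varepsilon$.
   Context: For a $2$-manifold $M$ with local coordinates $(q^1,q^2)$, $\mathbb{R}\times T^2M$ has coordinates $(t,q^i,\dot q^i,\ddot q^i)$; contact forms $\omega^{i}=dq^i-\dot q^i dt$. A source form is $\varepsilon=\sum_i\varepsilon_i\omega^i\wedge dt$. For a (possibly second-order) Lagrange function $\mathscr L(t,q,\dot q,\ddot q)$, the Euler–Lagrange form is $E_\lambda=\sum_iE_i(\mathscr L)\omega^i\wedge dt$ with $E_i(\mathscr L)=\partial\mathscr L/\partial q^i-\frac{d}{dt}\partial\mathscr L/\partial\dot q^i+\frac{d^2}{dt^2}\partial\mathscr L/\partial\ddot q^i$, $d/dt$ the total derivative. Globally variational: there is a Lagrange function defined on all of the jet space whose Euler–Lagrange form is $\varepsilon$. *)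

theory Defs
  imports "HOL-Analysis.Analysis"
begin

text \<open>Points of the jet space over a chart of a 2-manifold: a time t :: real and
  jet coordinates x :: nat => nat => real, where x k i is the k-th time derivative
  of the i-th coordinate q^i (i = 0: phi, i = 1: tau).  Order k <= 4 suffices for
  everything below (the Euler-Lagrange expressions of a second order Lagrangian
  live on the 4-jet).\<close>

type_synonym jet = "nat \<Rightarrow> nat \<Rightarrow> real"

definition pdq :: "nat \<Rightarrow> nat \<Rightarrow> (real \<Rightarrow> jet \<Rightarrow> real) \<Rightarrow> real \<Rightarrow> jet \<Rightarrow> real" where
  "pdq k i F t x = deriv (\<lambda>s. F t (x(k := (x k)(i := s)))) (x k i)"

definition pdt :: "(real \<Rightarrow> jet \<Rightarrow> real) \<Rightarrow> real \<Rightarrow> jet \<Rightarrow> real" where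
  "pdt F t x = deriv (\<lambda>s. F s x) t"

text \<open>Total derivative d/dt (for functions depending on jets of order at most 3).\<close>
definition TD :: "(real \<Rightarrow> jet \<Rightarrow> real) \<Rightarrow> real \<Rightarrow> jet \<Rightarrow> real" where
  "TD F t x = pdt F t x + (\<Sum>k<4. \<Sum>i<2. x (Suc k) i * pdq k i F t x)"

definition EL :: "(real \<Rightarrow> jet \<Rightarrow> real) \<Rightarrow> nat \<Rightarrow> real \<Rightarrow> jet \<Rightarrow> real" where
  "EL L i t x = pdq 0 i L t x - TD (pdq 1 i L) t x + TD (TD (pdq 2 i L)) t x"

text \<open>The data of the Moebius strip example (same formulas in both charts).\<close>
definition gM :: "real \<Rightarrow> real \<Rightarrow> real \<Rightarrow> real" where
  "gM r \<phi> \<tau> = (r + \<tau> * cos (\<phi>/2))^2 + \<tau>^2 / 4"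

definition kM :: "real \<Rightarrow> real \<Rightarrow> real \<Rightarrow> real" where
  "kM r \<phi> \<tau> = 4 * cos (\<phi>/2) * (r + \<tau> * cos (\<phi>/2)) + \<tau>"

definition epsM :: "real \<Rightarrow> nat \<Rightarrow> real \<Rightarrow> jet \<Rightarrow> real" where
  "epsM r i t x =
     (let \<phi> = x 0 0; \<tau> = x 0 1; d\<phi> = x 1 0; d\<tau> = x 1 1; dd\<phi> = x 2 0; dd\<tau> = x 2 1 in
      if i = 0 then
        1/2 * d\<phi>^2 * \<tau> * sin (\<phi>/2) * (r + \<tau> * cos (\<phi>/2)) - 1/2 * d\<phi> * d\<tau> * kM r \<phi> \<tau>
        - gM r \<phi> \<tau> * dd\<phi>
      else 1/4 * d\<phi>^2 * kM r \<phi> \<tau> - dd\<tau>)"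

definition LagM :: "real \<Rightarrow> real \<Rightarrow> jet \<Rightarrow> real" where
  "LagM r t x =
     (let \<phi> = x 0 0; \<tau> = x 0 1; d\<phi> = x 1 0; d\<tau> = x 1 1; dd\<phi> = x 2 0; dd\<tau> = x 2 1 in
      - 1/2 * d\<phi>^3 * \<tau> * sin (\<phi>/2) * (r + \<tau> * cos (\<phi>/2)) * t
      + 1/4 * d\<phi>^2 * d\<tau> * kM r \<phi> \<tau> * t
      + gM r \<phi> \<tau> * d\<phi> * dd\<phi> * t + d\<tau> * dd\<tau> * t
      + gM r \<phi> \<tau> * d\<phi>^2 + d\<tau>^2)"

definition chartA :: "real \<Rightarrow> jet set" where
  "chartA a = {x. - pi < x 0 0 \<and> x 0 0 < pi \<and> - a < x 0 1 \<and> x 0 1 < a}"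

definition chartB :: "real \<Rightarrow> jet set" where
  "chartB a = {x. 0 < x 0 0 \<and> x 0 0 < 2 * pi \<and> - a < x 0 1 \<and> x 0 1 < a}"

text \<open>Prolonged transition map on the overlap part phi-bar in (pi,2pi):
  (phi,tau) = (phi-bar - 2 pi, - tau-bar), hence all derivatives of tau change sign.
  (On the part phi-bar in (0,pi) the transition is the identity.)\<close>
definition transBA :: "jet \<Rightarrow> jet" where
  "transBA x = (\<lambda>k i. if i = 1 then - x k 1 else if i = 0 \<and> k = 0 then x 0 0 - 2 * pi else x k i)"

end

theory Submission imports Defs begin

lemma pdqI: assumes "((\<lambda>s. F t (x(k := (x k)(i := s)))) has_real_derivative D') (at (x k i))"
  and "D' = D"
  shows "pdq k i F t x = D"
  unfolding pdq_def using assms DERIV_imp_deriv by blast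

lemma pdtI: assumes "((\<lambda>s. F s x) has_real_derivative D') (at t)" and "D' = D"
  shows "pdt F t x = D"
  unfolding pdt_def using assms DERIV_imp_deriv by blast

lemma TDI:
  assumes "pdt F t x = D"
   "pdq 0 0 F t x = D00" "pdq 0 1 F t x = D01"
   "pdq 1 0 F t x = D10" "pdq 1 1 F t x = D11"
   "pdq 2 0 F t x = D20" "pdq 2 1 F t x = D21"
   "pdq 3 0 F t x = D30" "pdq 3 1 F t x = D31"
  shows "TD F t x = D + (x 1 0 * D00 + x 1 1 * D01) + (x 2 0 * D10 + x 2 1 * D11)
     + (x 3 0 * D20 + x 3 1 * D21) + (x 4 0 * D30 + x 4 1 * D31)"
  unfolding TD_def using assms by (simp add: numeral_eq_Suc)

definition "gphi r \<phi> \<tau> = - \<tau> * sin (\<phi>/2) * (r + \<tau> * cos (\<phi>/2))"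
definition "gtau r \<phi> \<tau> = 2 * cos (\<phi>/2) * (r + \<tau> * cos (\<phi>/2)) + \<tau>/2"
definition "kphi r \<phi> \<tau> = - 2 * sin (\<phi>/2) * (r + \<tau> * cos (\<phi>/2)) - 2 * \<tau> * cos (\<phi>/2) * sin (\<phi>/2)"
definition "ktau r \<phi> \<tau> = 4 * (cos (\<phi>/2))^2 + (1::real)"
definition "AM r \<phi> \<tau> = \<tau> * sin (\<phi>/2) * (r + \<tau> * cos (\<phi>/2))"
definition "Aphi r \<phi> \<tau> = \<tau> * cos (\<phi>/2) * (r + \<tau> * cos (\<phi>/2)) / 2 - \<tau>^2 * (sin (\<phi>/2))^2 / 2"
definition "Atau r \<phi> \<tau> = sin (\<phi>/2) * (r + \<tau> * cos (\<phi>/2)) + \<tau> * sin (\<phi>/2) * cos (\<phi>/2)"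
definition "gpp r \<phi> \<tau> = - \<tau> * cos (\<phi>/2) * (r + \<tau> * cos (\<phi>/2)) / 2 + \<tau>^2 * (sin (\<phi>/2))^2 / 2"
definition "gpt r \<phi> \<tau> = - (sin (\<phi>/2) * (r + \<tau> * cos (\<phi>/2)) + \<tau> * sin (\<phi>/2) * cos (\<phi>/2))"
definition "gtt r (\<phi>::real) (\<tau>::real) = 2 * (cos (\<phi>/2))^2 + (1/2::real)"

lemmas alldefs = gM_def kM_def gphi_def gtau_def kphi_def ktau_def AM_def Aphi_def Atau_def gpp_def gpt_def gtt_def

lemma LagM_alt: "LagM r t x =
   t * (- 1/2 * x 1 0 ^ 3 * AM r (x 0 0) (x 0 1) + 1/4 * x 1 0 ^ 2 * x 1 1 * kM r (x 0 0) (x 0 1)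
        + gM r (x 0 0) (x 0 1) * x 1 0 * x 2 0 + x 1 1 * x 2 1)
   + gM r (x 0 0) (x 0 1) * x 1 0 ^ 2 + x 1 1 ^ 2"
  unfolding LagM_def Let_def AM_def by (simp add: algebra_simps)


lemma gM_d: "(f has_real_derivative f') (at y) \<Longrightarrow> (h has_real_derivative h') (at y) \<Longrightarrow>
  D = f' * gphi r (f y) (h y) + h' * gtau r (f y) (h y) \<Longrightarrow>
  ((\<lambda>z. gM r (f z) (h z)) has_real_derivative D) (at y)"
  unfolding gM_def gphi_def gtau_def
  apply (rule derivative_eq_intros refl | simp)+
  apply (simp add: field_simps power2_eq_square)
  done

lemma kM_d: "(f has_real_derivative f') (at y) \<Longrightarrow> (h has_real_derivative h') (at y) \<Longrightarrow>
  D = f' * kphi r (f y) (h y) + h' * ktau r (f y) (h y) \<Longrightarrow>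
  ((\<lambda>z. kM r (f z) (h z)) has_real_derivative D) (at y)"
  unfolding kM_def kphi_def ktau_def
  apply (rule derivative_eq_intros refl | simp)+
  apply (simp add: field_simps power2_eq_square)
  done

lemma AM_d: "(f has_real_derivative f') (at y) \<Longrightarrow> (h has_real_derivative h') (at y) \<Longrightarrow>
  D = f' * Aphi r (f y) (h y) + h' * Atau r (f y) (h y) \<Longrightarrow>
  ((\<lambda>z. AM r (f z) (h z)) has_real_derivative D) (at y)"
  unfolding AM_def Aphi_def Atau_def
  apply (rule derivative_eq_intros refl | simp)+
  apply (simp add: field_simps power2_eq_square)
  done

lemma gphi_d: "(f has_real_derivative f') (at y) \<Longrightarrow> (h has_real_derivative h') (at y) \<Longrightarrow>
  D = f' * gpp r (f y) (h y) + h' * gpt r (f y) (h y) \<Longrightarrow>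
  ((\<lambda>z. gphi r (f z) (h z)) has_real_derivative D) (at y)"
  unfolding gphi_def gpp_def gpt_def
  apply (rule derivative_eq_intros refl | simp)+
  apply (simp add: field_simps power2_eq_square)
  done

lemma gtau_d: "(f has_real_derivative f') (at y) \<Longrightarrow> (h has_real_derivative h') (at y) \<Longrightarrow>
  D = f' * gpt r (f y) (h y) + h' * gtt r (f y) (h y) \<Longrightarrow>
  ((\<lambda>z. gtau r (f z) (h z)) has_real_derivative D) (at y)"
  unfolding gtau_def gpt_def gtt_def
  apply (rule derivative_eq_intros refl | simp)+
  apply (simp add: field_simps power2_eq_square)
  done

lemmas myd = gM_d kM_d AM_d gphi_d gtau_d
lemma P00: "pdq 0 0 (LagM r) t x = t*(-1/2* (x 1 0)^3* (Aphi r (x 0 0) (x 0 1)) + 1/4* (x 1 0)^2* (x 1 1)* (kphi r (x 0 0) (x 0 1)) + (gphi r (x 0 0) (x 0 1))* (x 1 0)* (x 2 0)) + (gphi r (x 0 0) (x 0 1))* (x 1 0)^2"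
  apply (rule pdqI)
   apply (simp add: LagM_alt)
   apply ((rule myd derivative_eq_intros refl | simp)+)[1]
  apply (simp add: field_simps power2_eq_square power3_eq_cube)
  done

lemma P01: "pdq 0 1 (LagM r) t x = t*(-1/2* (x 1 0)^3* (Atau r (x 0 0) (x 0 1)) + 1/4* (x 1 0)^2* (x 1 1)* (ktau r (x 0 0) (x 0 1)) + (gtau r (x 0 0) (x 0 1))* (x 1 0)* (x 2 0)) + (gtau r (x 0 0) (x 0 1))* (x 1 0)^2"
  apply (rule pdqI)
   apply (simp add: LagM_alt)
   apply ((rule myd derivative_eq_intros refl | simp)+)[1]
  apply (simp add: field_simps power2_eq_square power3_eq_cube)
  done

lemma P10: "pdq 1 0 (LagM r) t x = t*(-3/2* (x 1 0)^2* (AM r (x 0 0) (x 0 1)) + 1/2* (x 1 0)* (x 1 1)* (kM r (x 0 0) (x 0 1)) + (gM r (x 0 0) (x 0 1))* (x 2 0)) + 2* (gM r (x 0 0) (x 0 1))* (x 1 0)"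
  apply (rule pdqI)
   apply (simp add: LagM_alt)
   apply ((rule myd derivative_eq_intros refl | simp)+)[1]
  apply (simp add: field_simps power2_eq_square power3_eq_cube)
  done

lemma P11: "pdq 1 1 (LagM r) t x = t*(1/4* (x 1 0)^2* (kM r (x 0 0) (x 0 1)) + (x 2 1)) + 2* (x 1 1)"
  apply (rule pdqI)
   apply (simp add: LagM_alt)
   apply ((rule myd derivative_eq_intros refl | simp)+)[1]
  apply (simp add: field_simps power2_eq_square power3_eq_cube)
  done

lemma P20: "pdq 2 0 (LagM r) t x = t*(gM r (x 0 0) (x 0 1))*(x 1 0)"
  apply (rule pdqI)
   apply (simp add: LagM_alt)
   apply ((rule myd derivative_eq_intros refl | simp)+)[1]
  apply (simp add: field_simps power2_eq_square power3_eq_cube)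
  done

lemma P21: "pdq 2 1 (LagM r) t x = t*(x 1 1)"
  apply (rule pdqI)
   apply (simp add: LagM_alt)
   apply ((rule myd derivative_eq_intros refl | simp)+)[1]
  apply (simp add: field_simps power2_eq_square power3_eq_cube)
  done

lemma T20: "TD (pdq 2 0 (LagM r)) t x = ((gM r (x 0 0) (x 0 1))*(x 1 0)) + ((x 1 0) * (t*(gphi r (x 0 0) (x 0 1))*(x 1 0)) + (x 1 1) * (t*(gtau r (x 0 0) (x 0 1))*(x 1 0))) + ((x 2 0) * (t*(gM r (x 0 0) (x 0 1))) + (x 2 1) * (0)) + ((x 3 0) * (0) + (x 3 1) * (0)) + ((x 4 0) * (0) + (x 4 1) * (0))"
  apply (rule TDI)
  apply (unfold P20)
  apply ((rule pdqI pdtI), simp, ((rule myd derivative_eq_intros refl | simp)+)[1], (simp add: field_simps power2_eq_square)?)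
  apply ((rule pdqI pdtI), simp, ((rule myd derivative_eq_intros refl | simp)+)[1], (simp add: field_simps power2_eq_square)?)
  apply ((rule pdqI pdtI), simp, ((rule myd derivative_eq_intros refl | simp)+)[1], (simp add: field_simps power2_eq_square)?)
  apply ((rule pdqI pdtI), simp, ((rule myd derivative_eq_intros refl | simp)+)[1], (simp add: field_simps power2_eq_square)?)
  apply ((rule pdqI pdtI), simp, ((rule myd derivative_eq_intros refl | simp)+)[1], (simp add: field_simps power2_eq_square)?)
  apply ((rule pdqI pdtI), simp, ((rule myd derivative_eq_intros refl | simp)+)[1], (simp add: field_simps power2_eq_square)?)
  apply ((rule pdqI pdtI), simp, ((rule myd derivative_eq_intros refl | simp)+)[1], (simp add: field_simps power2_eq_square)?)
  apply ((rule pdqI pdtI), simp, ((rule myd derivative_eq_intros refl | simp)+)[1], (simp add: field_simps power2_eq_square)?)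
  apply ((rule pdqI pdtI), simp, ((rule myd derivative_eq_intros refl | simp)+)[1], (simp add: field_simps power2_eq_square)?)
  done

lemma T21: "TD (pdq 2 1 (LagM r)) t x = ((x 1 1)) + ((x 1 0) * (0) + (x 1 1) * (0)) + ((x 2 0) * (0) + (x 2 1) * (t)) + ((x 3 0) * (0) + (x 3 1) * (0)) + ((x 4 0) * (0) + (x 4 1) * (0))"
  apply (rule TDI)
  apply (unfold P21)
  apply ((rule pdqI pdtI), simp, ((rule myd derivative_eq_intros refl | simp)+)[1], (simp add: field_simps power2_eq_square)?)
  apply ((rule pdqI pdtI), simp, ((rule myd derivative_eq_intros refl | simp)+)[1], (simp add: field_simps power2_eq_square)?)
  apply ((rule pdqI pdtI), simp, ((rule myd derivative_eq_intros refl | simp)+)[1], (simp add: field_simps power2_eq_square)?)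
  apply ((rule pdqI pdtI), simp, ((rule myd derivative_eq_intros refl | simp)+)[1], (simp add: field_simps power2_eq_square)?)
  apply ((rule pdqI pdtI), simp, ((rule myd derivative_eq_intros refl | simp)+)[1], (simp add: field_simps power2_eq_square)?)
  apply ((rule pdqI pdtI), simp, ((rule myd derivative_eq_intros refl | simp)+)[1], (simp add: field_simps power2_eq_square)?)
  apply ((rule pdqI pdtI), simp, ((rule myd derivative_eq_intros refl | simp)+)[1], (simp add: field_simps power2_eq_square)?)
  apply ((rule pdqI pdtI), simp, ((rule myd derivative_eq_intros refl | simp)+)[1], (simp add: field_simps power2_eq_square)?)
  apply ((rule pdqI pdtI), simp, ((rule myd derivative_eq_intros refl | simp)+)[1], (simp add: field_simps power2_eq_square)?)
  done

lemma T11: "TD (pdq 1 1 (LagM r)) t x = (1/4*(x 1 0)^2*(kM r (x 0 0) (x 0 1)) + (x 2 1)) + ((x 1 0) * (t*(1/4*(x 1 0)^2*(kphi r (x 0 0) (x 0 1)))) + (x 1 1) * (t*(1/4*(x 1 0)^2*(ktau r (x 0 0) (x 0 1))))) + ((x 2 0) * (t*(1/2*(x 1 0)*(kM r (x 0 0) (x 0 1)))) + (x 2 1) * (2)) + ((x 3 0) * (0) + (x 3 1) * (t)) + ((x 4 0) * (0) + (x 4 1) * (0))"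
  apply (rule TDI)
  apply (unfold P11)
  apply ((rule pdqI pdtI), simp, ((rule myd derivative_eq_intros refl | simp)+)[1], (simp add: field_simps power2_eq_square)?)
  apply ((rule pdqI pdtI), simp, ((rule myd derivative_eq_intros refl | simp)+)[1], (simp add: field_simps power2_eq_square)?)
  apply ((rule pdqI pdtI), simp, ((rule myd derivative_eq_intros refl | simp)+)[1], (simp add: field_simps power2_eq_square)?)
  apply ((rule pdqI pdtI), simp, ((rule myd derivative_eq_intros refl | simp)+)[1], (simp add: field_simps power2_eq_square)?)
  apply ((rule pdqI pdtI), simp, ((rule myd derivative_eq_intros refl | simp)+)[1], (simp add: field_simps power2_eq_square)?)
  apply ((rule pdqI pdtI), simp, ((rule myd derivative_eq_intros refl | simp)+)[1], (simp add: field_simps power2_eq_square)?)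
  apply ((rule pdqI pdtI), simp, ((rule myd derivative_eq_intros refl | simp)+)[1], (simp add: field_simps power2_eq_square)?)
  apply ((rule pdqI pdtI), simp, ((rule myd derivative_eq_intros refl | simp)+)[1], (simp add: field_simps power2_eq_square)?)
  apply ((rule pdqI pdtI), simp, ((rule myd derivative_eq_intros refl | simp)+)[1], (simp add: field_simps power2_eq_square)?)
  done

lemma T10: "TD (pdq 1 0 (LagM r)) t x = (-3/2*(x 1 0)^2*(AM r (x 0 0) (x 0 1)) + 1/2*(x 1 0)*(x 1 1)*(kM r (x 0 0) (x 0 1)) + (gM r (x 0 0) (x 0 1))*(x 2 0)) + ((x 1 0) * (t*(-3/2*(x 1 0)^2*(Aphi r (x 0 0) (x 0 1)) + 1/2*(x 1 0)*(x 1 1)*(kphi r (x 0 0) (x 0 1)) + (gphi r (x 0 0) (x 0 1))*(x 2 0)) + 2*(gphi r (x 0 0) (x 0 1))*(x 1 0)) + (x 1 1) * (t*(-3/2*(x 1 0)^2*(Atau r (x 0 0) (x 0 1)) + 1/2*(x 1 0)*(x 1 1)*(ktau r (x 0 0) (x 0 1)) + (gtau r (x 0 0) (x 0 1))*(x 2 0)) + 2*(gtau r (x 0 0) (x 0 1))*(x 1 0))) + ((x 2 0) * (t*(-3*(x 1 0)*(AM r (x 0 0) (x 0 1)) + 1/2*(x 1 1)*(kM r (x 0 0) (x 0 1))) + 2*(gM r (x 0 0) (x 0 1))) + (x 2 1) * (t*(1/2*(x 1 0)*(kM r (x 0 0) (x 0 1))))) + ((x 3 0) * (t*(gM r (x 0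 0) (x 0 1))) + (x 3 1) * (0)) + ((x 4 0) * (0) + (x 4 1) * (0))"
  apply (rule TDI)
  apply (unfold P10)
  apply ((rule pdqI pdtI), simp, ((rule myd derivative_eq_intros refl | simp)+)[1], (simp add: field_simps power2_eq_square)?)
  apply ((rule pdqI pdtI), simp, ((rule myd derivative_eq_intros refl | simp)+)[1], (simp add: field_simps power2_eq_square)?)
  apply ((rule pdqI pdtI), simp, ((rule myd derivative_eq_intros refl | simp)+)[1], (simp add: field_simps power2_eq_square)?)
  apply ((rule pdqI pdtI), simp, ((rule myd derivative_eq_intros refl | simp)+)[1], (simp add: field_simps power2_eq_square)?)
  apply ((rule pdqI pdtI), simp, ((rule myd derivative_eq_intros refl | simp)+)[1], (simp add: field_simps power2_eq_square)?)
  apply ((rule pdqI pdtI), simp, ((rule myd derivative_eq_intros refl | simp)+)[1], (simp add: field_simps power2_eq_square)?)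
  apply ((rule pdqI pdtI), simp, ((rule myd derivative_eq_intros refl | simp)+)[1], (simp add: field_simps power2_eq_square)?)
  apply ((rule pdqI pdtI), simp, ((rule myd derivative_eq_intros refl | simp)+)[1], (simp add: field_simps power2_eq_square)?)
  apply ((rule pdqI pdtI), simp, ((rule myd derivative_eq_intros refl | simp)+)[1], (simp add: field_simps power2_eq_square)?)
  done

lemma TT20: "TD (TD (pdq 2 0 (LagM r))) t x = ((x 1 0)*((gphi r (x 0 0) (x 0 1))*(x 1 0)) + (x 1 1)*((gtau r (x 0 0) (x 0 1))*(x 1 0)) + (x 2 0)*(gM r (x 0 0) (x 0 1))) + ((x 1 0) * ((gphi r (x 0 0) (x 0 1))*(x 1 0) + (x 1 0)*(t*(gpp r (x 0 0) (x 0 1))*(x 1 0)) + (x 1 1)*(t*(gpt r (x 0 0) (x 0 1))*(x 1 0)) + (x 2 0)*(t*(gphi r (x 0 0) (x 0 1)))) + (x 1 1) * ((gtau r (x 0 0) (x 0 1))*(x 1 0) + (x 1 0)*(t*(gpt r (x 0 0) (x 0 1))*(x 1 0)) + (x 1 1)*(t*(gtt r (x 0 0) (x 0 1))*(x 1 0)) + (x 2 0)*(t*(gtau r (x 0 0) (x 0 1))))) + ((x 2 0) * ((gM r (x 0 0) (x 0 1)) + 2*(x 1 0)*(t*(gphi r (x 0 0) (x 0 1))) + (x 1 1)*(t*(gtau r (x 0 0) (x 0 1)))) + (x 2 1) * ((x 1 0)*(t*(gtau r (x 0 0) (x 0 1))))) + ((x 3 0) * (t*(gM r (x 0 0) (x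 0 1))) + (x 3 1) * (0)) + ((x 4 0) * (0) + (x 4 1) * (0))"
  apply (rule TDI)
  apply (unfold T20)
  apply ((rule pdqI pdtI), simp, ((rule myd derivative_eq_intros refl | simp)+)[1], (simp add: field_simps power2_eq_square)?)
  apply ((rule pdqI pdtI), simp, ((rule myd derivative_eq_intros refl | simp)+)[1], (simp add: field_simps power2_eq_square)?)
  apply ((rule pdqI pdtI), simp, ((rule myd derivative_eq_intros refl | simp)+)[1], (simp add: field_simps power2_eq_square)?)
  apply ((rule pdqI pdtI), simp, ((rule myd derivative_eq_intros refl | simp)+)[1], (simp add: field_simps power2_eq_square)?)
  apply ((rule pdqI pdtI), simp, ((rule myd derivative_eq_intros refl | simp)+)[1], (simp add: field_simps power2_eq_square)?)
  apply ((rule pdqI pdtI), simp, ((rule myd derivative_eq_intros refl | simp)+)[1], (simp add: field_simps power2_eq_square)?)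
  apply ((rule pdqI pdtI), simp, ((rule myd derivative_eq_intros refl | simp)+)[1], (simp add: field_simps power2_eq_square)?)
  apply ((rule pdqI pdtI), simp, ((rule myd derivative_eq_intros refl | simp)+)[1], (simp add: field_simps power2_eq_square)?)
  apply ((rule pdqI pdtI), simp, ((rule myd derivative_eq_intros refl | simp)+)[1], (simp add: field_simps power2_eq_square)?)
  done

lemma TT21: "TD (TD (pdq 2 1 (LagM r))) t x = ((x 2 1)) + ((x 1 0) * (0) + (x 1 1) * (0)) + ((x 2 0) * (0) + (x 2 1) * (1)) + ((x 3 0) * (0) + (x 3 1) * (t)) + ((x 4 0) * (0) + (x 4 1) * (0))"
  apply (rule TDI)
  apply (unfold T21)
  apply ((rule pdqI pdtI), simp, ((rule myd derivative_eq_intros refl | simp)+)[1], (simp add: field_simps power2_eq_square)?)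
  apply ((rule pdqI pdtI), simp, ((rule myd derivative_eq_intros refl | simp)+)[1], (simp add: field_simps power2_eq_square)?)
  apply ((rule pdqI pdtI), simp, ((rule myd derivative_eq_intros refl | simp)+)[1], (simp add: field_simps power2_eq_square)?)
  apply ((rule pdqI pdtI), simp, ((rule myd derivative_eq_intros refl | simp)+)[1], (simp add: field_simps power2_eq_square)?)
  apply ((rule pdqI pdtI), simp, ((rule myd derivative_eq_intros refl | simp)+)[1], (simp add: field_simps power2_eq_square)?)
  apply ((rule pdqI pdtI), simp, ((rule myd derivative_eq_intros refl | simp)+)[1], (simp add: field_simps power2_eq_square)?)
  apply ((rule pdqI pdtI), simp, ((rule myd derivative_eq_intros refl | simp)+)[1], (simp add: field_simps power2_eq_square)?)
  apply ((rule pdqI pdtI), simp, ((rule myd derivative_eq_intros refl | simp)+)[1], (simp add: field_simps power2_eq_square)?)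
  apply ((rule pdqI pdtI), simp, ((rule myd derivative_eq_intros refl | simp)+)[1], (simp add: field_simps power2_eq_square)?)
  done



lemma rels: "gphi r a b = - AM r a b" "gpp r a b = - Aphi r a b" "gpt r a b = - Atau r a b"
  "Atau r a b = - kphi r a b / 2" "gtau r a b = kM r a b / 2" "gtt r a b = ktau r a b / 2"
  unfolding alldefs by (simp_all add: field_simps)

lemma eps_alt: "epsM r 0 t x = 1/2 * (x 1 0)^2 * AM r (x 0 0) (x 0 1) - 1/2 * x 1 0 * x 1 1 * kM r (x 0 0) (x 0 1) - gM r (x 0 0) (x 0 1) * x 2 0"
  "epsM r 1 t x = 1/4 * (x 1 0)^2 * kM r (x 0 0) (x 0 1) - x 2 1"
  unfolding epsM_def Let_def AM_def by (simp_all add: algebra_simps)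

lemma EL1: "EL (LagM r) 1 t x = epsM r 1 t x"
  unfolding EL_def P01 T11 TT21 eps_alt rels
  by (simp add: algebra_simps power2_eq_square power3_eq_cube)

lemma EL0: "EL (LagM r) 0 t x = epsM r 0 t x"
  unfolding EL_def P00 T10 TT20 eps_alt rels
  by (simp add: algebra_simps power2_eq_square power3_eq_cube)

lemma cos_sh: "cos (((y::real) - 2*pi)/2) = - cos (y/2)"
proof -
  have e: "(y - 2*pi)/2 = y/2 - pi" by (simp add: field_simps)
  show ?thesis unfolding e by (simp add: cos_diff)
qed

lemma sin_sh: "sin (((y::real) - 2*pi)/2) = - sin (y/2)"
proof -
  have e: "(y - 2*pi)/2 = y/2 - pi" by (simp add: field_simps)
  show ?thesis unfolding e by (simp add: sin_diff)
qed

theorem mainTheorem8: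
  fixes r a :: real
  assumes "0 < a" and "a < r"
  shows
    \<comment> \<open>eps is globally defined: omega^phi = omega^phi-bar, omega^tau = - omega^tau-bar on the overlap\<close>
    "(\<forall>t x. x \<in> chartB a \<and> pi < x 0 0 \<longrightarrow>
        transBA x \<in> chartA a \<and>
        epsM r 0 t (transBA x) = epsM r 0 t x \<and>
        epsM r 1 t (transBA x) = - epsM r 1 t x)
   \<and> \<comment> \<open>the Lagrange function is globally defined\<close>
     (\<forall>t x. x \<in> chartB a \<and> pi < x 0 0 \<longrightarrow> LagM r t (transBA x) = LagM r t x)
   \<and> \<comment> \<open>its Euler-Lagrange form is eps, in both charts\<close>
     (\<forall>t x i. x \<in> chartA a \<union> chartB a \<and> i < 2 \<longrightarrow> EL (LagM r) i t x = epsM r i t x)"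
proof (intro conjI allI impI)
  fix t x assume h: "x \<in> chartB a \<and> pi < x 0 0"
  then show "transBA x \<in> chartA a"
    unfolding chartA_def chartB_def transBA_def by auto
  show "epsM r 0 t (transBA x) = epsM r 0 t x"
    unfolding epsM_def Let_def transBA_def kM_def gM_def
    by (simp add: cos_sh sin_sh; simp add: algebra_simps power2_eq_square)
  show "epsM r 1 t (transBA x) = - epsM r 1 t x"
    unfolding epsM_def Let_def transBA_def kM_def gM_def
    by (simp add: cos_sh sin_sh; simp add: algebra_simps power2_eq_square)
next
  fix t x assume h: "x \<in> chartB a \<and> pi < x 0 0"
  show "LagM r t (transBA x) = LagM r t x"
    unfolding LagM_def Let_def transBA_def kM_def gM_def
    by (simp add: cos_sh sin_sh; simp add: algebra_simps power2_eq_square)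
next
  fix t x and i :: nat assume h: "x \<in> chartA a \<union> chartB a \<and> i < 2"
  then have "i = 0 \<or> i = 1" by auto
  then show "EL (LagM r) i t x = epsM r i t x" using EL0 EL1 by auto
qed

end
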